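(* Let $X$ be a countably infinite set and $W=\{0,1\}^X$. There is no binary relation $\succeq$ on $W$ that is a preorder (reflexive and transitive) and simultaneously satisfies Strong Pareto, Permutation Invariance, and Completeness.
   Context: Elements of $W$ ("worlds") are functions $w:X\to\mathbb R$ (here with values in $\{0,1\}$). For a preorder $\succeq$, write $w\succ v$ iff $w\succeq v$ and not $v\succeq w$. For a permutation $\pi$ of $X$ and $w\in W$, define $\pi(w)\in W$ by $\pi(w)(x)=w(\pi(x))$. Strong Pareto: for all $w,v\in W$, if $w(x)\ge v(x)$ for all $x\in X$ and $w(x)>v(x)$ for some $x\in X$, then $w\succ v$. Permutation Invariance: for all $w,v\in W$ and every permutation $\pi$ of $X$, $w\succeq v$ if and only if $\pi(w)\succeq\pi(v)$. Completeness: for all $w,v\in W$, $w\succeq v$ or $v\succeq w$. *)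

theory Defs
  imports Complex_Main "HOL-Library.Countable_Set"
begin

definition worlds01 :: "('x \<Rightarrow> real) set" where
  "worlds01 = {w. \<forall>x. w x \<in> {0, 1}}"

definition strict_of :: "('w \<Rightarrow> 'w \<Rightarrow> bool) \<Rightarrow> 'w \<Rightarrow> 'w \<Rightarrow> bool" where
  "strict_of R w v \<longleftrightarrow> R w v \<and> \<not> R v w"

definition preorder_on :: "'w set \<Rightarrow> ('w \<Rightarrow> 'w \<Rightarrow> bool) \<Rightarrow> bool" where
  "preorder_on W R \<longleftrightarrow> (\<forall>w\<in>W. R w w) \<and>
     (\<forall>u\<in>W. \<forall>v\<in>W. \<forall>w\<in>W. R u v \<longrightarrow> R v w \<longrightarrow> R u w)"

definition strong_pareto :: "('x \<Rightarrow> real) set \<Rightarrow> (('x \<Rightarrow> real) \<Rightarrow> ('x \<Rightarrow> real) \<Rightarrow> bool) \<Rightarrow> bool" where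
  "strong_pareto W R \<longleftrightarrow> (\<forall>w\<in>W. \<forall>v\<in>W.
     (\<forall>x. w x \<ge> v x) \<and> (\<exists>x. w x > v x) \<longrightarrow> strict_of R w v)"

definition permutation_invariance :: "('x \<Rightarrow> real) set \<Rightarrow> (('x \<Rightarrow> real) \<Rightarrow> ('x \<Rightarrow> real) \<Rightarrow> bool) \<Rightarrow> bool" where
  "permutation_invariance W R \<longleftrightarrow> (\<forall>w\<in>W. \<forall>v\<in>W. \<forall>\<pi>::'x \<Rightarrow> 'x. bij \<pi> \<longrightarrow>
     (R w v \<longleftrightarrow> R (w \<circ> \<pi>) (v \<circ> \<pi>)))"

definition completeness :: "'w set \<Rightarrow> ('w \<Rightarrow> 'w \<Rightarrow> bool) \<Rightarrow> bool" where
  "completeness W R \<longleftrightarrow> (\<forall>w\<in>W. \<forall>v\<in>W. R w v \<or> R v w)"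

end

theory Submission
  imports Defs "HOL-Library.Nat_Bijection"
begin

lemma bij_by_inverse:
  fixes t s :: "int \<Rightarrow> int"
  assumes "\<And>n. t (s n) = n" "\<And>n. s (t n) = n"
  shows "bij t"
  by (metis assms bij_betw_byWitness subset_UNIV surjI)

lemma conj_bij:
  fixes g :: "'x \<Rightarrow> int" and t :: "int \<Rightarrow> int"
  assumes "bij g" "bij t"
  shows "bij (inv g \<circ> t \<circ> g)"
  using assms by (intro bij_comp bij_imp_bij_inv) auto

theorem proposition1:
  assumes "countable (UNIV :: 'x set)" and "infinite (UNIV :: 'x set)"
  shows "\<not> (\<exists>R :: ('x \<Rightarrow> real) \<Rightarrow> ('x \<Rightarrow> real) \<Rightarrow> bool.
            preorder_on worlds01 R \<and> strong_pareto worlds01 R \<and>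
            permutation_invariance worlds01 R \<and> completeness worlds01 R)"
proof
  assume "\<exists>R :: ('x \<Rightarrow> real) \<Rightarrow> ('x \<Rightarrow> real) \<Rightarrow> bool.
            preorder_on worlds01 R \<and> strong_pareto worlds01 R \<and>
            permutation_invariance worlds01 R \<and> completeness worlds01 R"
  then obtain R :: "('x \<Rightarrow> real) \<Rightarrow> ('x \<Rightarrow> real) \<Rightarrow> bool" where
    PO: "preorder_on worlds01 R" and SP: "strong_pareto worlds01 R" and
    PI: "permutation_invariance worlds01 R" and CO: "completeness worlds01 R" by blast
  obtain e :: "'x \<Rightarrow> nat" where e: "bij_betw e UNIV UNIV"
    using countableE_infinite[OF assms] by blast
  define g where "g = int_decode \<circ> e"
  have bg: "bij g" unfolding g_def using e bij_int_decode by (simp add: bij_comp)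
  define h where "h = inv g"
  have gh: "g (h y) = y" for y unfolding h_def using bg by (simp add: bij_is_surj surj_f_inv_f)
  define t :: "int \<Rightarrow> int" where "t n = (if even n then n + 1 else n - 1)" for n
  define p :: "int \<Rightarrow> int" where "p n = (if even n then n else n - 2)" for n
  have bt: "bij t" by (rule bij_by_inverse[of t t]) (auto simp: t_def)
  have bp: "bij p" by (rule bij_by_inverse[of p "\<lambda>n. if even n then n else n + 2"]) (auto simp: p_def)
  define tX where "tX = h \<circ> t \<circ> g"
  define pX where "pX = h \<circ> p \<circ> g"
  have btX: "bij tX" unfolding tX_def h_def by (rule conj_bij[OF bg bt])
  have bpX: "bij pX" unfolding pX_def h_def by (rule conj_bij[OF bg bp])
  define a :: "'x \<Rightarrow> real" where "a x = (if g x \<ge> 0 \<and> even (g x) then 1 else 0)" for x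
  define b :: "'x \<Rightarrow> real" where "b x = (if g x \<ge> 0 \<and> odd (g x) then 1 else 0)" for x
  define b' where "b' = b \<circ> pX"
  have aW: "a \<in> worlds01" and bW: "b \<in> worlds01" and b'W: "b' \<in> worlds01"
    by (auto simp: worlds01_def a_def b_def b'_def)
  have at: "a \<circ> tX = b"
  proof
    fix x show "(a \<circ> tX) x = b x"
      by (cases "even (g x)") (auto simp: a_def b_def tX_def gh t_def)
  qed
  have bt': "b \<circ> tX = a"
  proof
    fix x show "(b \<circ> tX) x = a x"
      by (cases "even (g x)") (auto simp: a_def b_def tX_def gh t_def)
  qed
  have ap: "a \<circ> pX = a"
  proof
    fix x show "(a \<circ> pX) x = a x"
      by (cases "even (g x)") (auto simp: a_def pX_def gh p_def)
  qed
  have sym: "R a b \<longleftrightarrow> R b a"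
    using PI aW bW btX at bt' unfolding permutation_invariance_def by metis
  have Rab: "R a b" and Rba: "R b a"
    using CO aW bW sym unfolding completeness_def by auto
  have Rab': "R a b'" and Rb'a: "R b' a"
    using PI aW bW bpX ap Rab Rba unfolding permutation_invariance_def b'_def by metis+
  have le: "\<forall>x. b x \<ge> b' x"
  proof
    fix x show "b x \<ge> b' x"
      by (cases "even (g x)") (auto simp: b_def b'_def pX_def gh p_def)
  qed
  have "b (h 1) > b' (h 1)"
    by (auto simp: b_def b'_def pX_def gh p_def)
  then have "strict_of R b b'" using SP bW b'W le unfolding strong_pareto_def by blast
  moreover have "R b' b"
    using PO b'W aW bW Rb'a Rab unfolding preorder_on_def by blast
  ultimately show False unfolding strict_of_def by blast
qed

end
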